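(* Let $(\mathcal{T},X,r)$ be a nice tree decomposition of a terminal graph $(G,T)$ of width at most $w\ge1$, and let $n=|V(G)|\ge1$. Then $|V(\mathcal{T})|\le (w+4)n$.
   Context: A terminal graph $(G,T)$ is a graph with $T\subseteq V(G)$. $(G,T)$ is obtained from $(G-v,T\setminus\{v\})$ by introducing $v$ if $T\ne V(G)$, $v\in T$ and $N(v)\subseteq T$. $(G,T)$ is the join of $(G_1,T)$ and $(G_2,T)$ if $G_1,G_2$ are induced subgraphs of $G$, $V(G_1)\cap V(G_2)=T$, $V(G_1)\cup V(G_2)=V(G)$, $V(G_1)\ne T\ne V(G_2)$, and every edge of $G$ lies in $G_1$ or $G_2$. A nice tree decomposition of $(G,T)$ is a triple $(\mathcal{T},X,r)$ with $\mathcal{T}$ a tree rooted at $r$ and bags $X_u\subseteq V(G)$, defined recursively: (1) if $T=V(G)$, $\mathcal{T}$ may be the single node $r$ with $X_r=T$; (2) if $v\in V(G)\setminus T$ and $(\mathcal{T}',X,r')$ is a nice tree decomposition of $(G,T\cup\{v\})$, adding a new root $r$ with $X_r=T$ and edge $rr'$ gives one for $(G,T)$; (3) if $(G,T)$ is obtained from $(G-v,T\setminus\{v\})$ by introducing $v$ and $(\mathcal{T}',X,r')$ is one for $(G-v,T\setminus\{v\})$, adding a new root $r$ with $X_r=T$ and edge $rr'$ gives one for $(G,T)$; (4) if $(G,T)$ is the join of $(G_1,T)$ and $(G_2,T)$ with nice tree decompositions $(\mathcal{T}_i,X,r_i)$, adding a new root $r$ with $X_r=T$ and edges $rr_1,rr_2$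 gives one for $(G,T)$. The width is $\max_u |X_u|-1$. *)

theory Defs
  imports Main
begin

definition graph :: "'a set \<Rightarrow> 'a set set \<Rightarrow> bool" where
  "graph V E \<longleftrightarrow> finite V \<and> (\<forall>e\<in>E. \<exists>u v. u \<noteq> v \<and> e = {u, v} \<and> u \<in> V \<and> v \<in> V)"

definition terminal_graph :: "'a set \<Rightarrow> 'a set set \<Rightarrow> 'a set \<Rightarrow> bool" where
  "terminal_graph V E T \<longleftrightarrow> graph V E \<and> T \<subseteq> V"

definition nbhd :: "'a set set \<Rightarrow> 'a \<Rightarrow> 'a set" where
  "nbhd E v = {u. {u, v} \<in> E \<and> u \<noteq> v}"

text \<open>(G,T) is obtained from (G - v, T - {v}) by introducing v.\<close>
definition introduces :: "'a set \<Rightarrow> 'a set set \<Rightarrow> 'a set \<Rightarrow> 'a \<Rightarrow> bool" where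
  "introduces V E T v \<longleftrightarrow> T \<noteq> V \<and> v \<in> T \<and> nbhd E v \<subseteq> T"

definition is_join :: "'a set \<Rightarrow> 'a set set \<Rightarrow> 'a set \<Rightarrow> 'a set \<Rightarrow> 'a set set \<Rightarrow> 'a set \<Rightarrow> 'a set set \<Rightarrow> bool" where
  "is_join V E T V1 E1 V2 E2 \<longleftrightarrow>
     V1 \<subseteq> V \<and> V2 \<subseteq> V \<and>
     E1 = {e \<in> E. e \<subseteq> V1} \<and> E2 = {e \<in> E. e \<subseteq> V2} \<and>
     V1 \<inter> V2 = T \<and> V1 \<union> V2 = V \<and> V1 \<noteq> T \<and> V2 \<noteq> T \<and>
     E = E1 \<union> E2"

datatype 'a dtree = Leaf "'a set" | Unary "'a set" "'a dtree" | Binary "'a set" "'a dtree" "'a dtree"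

fun num_nodes :: "'a dtree \<Rightarrow> nat" where
  "num_nodes (Leaf _) = 1"
| "num_nodes (Unary _ t) = Suc (num_nodes t)"
| "num_nodes (Binary _ t1 t2) = Suc (num_nodes t1 + num_nodes t2)"

fun bags :: "'a dtree \<Rightarrow> 'a set set" where
  "bags (Leaf X) = {X}"
| "bags (Unary X t) = insert X (bags t)"
| "bags (Binary X t1 t2) = insert X (bags t1 \<union> bags t2)"

definition width_le :: "'a dtree \<Rightarrow> nat \<Rightarrow> bool" where
  "width_le t w \<longleftrightarrow> (\<forall>X\<in>bags t. finite X \<and> card X \<le> w + 1)"

inductive nice_td :: "'a set \<Rightarrow> 'a set set \<Rightarrow> 'a set \<Rightarrow> 'a dtree \<Rightarrow> bool" where
  leaf: "T = V \<Longrightarrow> nice_td V E T (Leaf T)"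
| forget: "v \<in> V - T \<Longrightarrow> nice_td V E (insert v T) t \<Longrightarrow> nice_td V E T (Unary T t)"
| intro: "introduces V E T v \<Longrightarrow>
          nice_td (V - {v}) {e \<in> E. v \<notin> e} (T - {v}) t \<Longrightarrow> nice_td V E T (Unary T t)"
| join: "is_join V E T V1 E1 V2 E2 \<Longrightarrow> nice_td V1 E1 T t1 \<Longrightarrow> nice_td V2 E2 T t2 \<Longrightarrow>
          nice_td V E T (Binary T t1 t2)"

end

theory Submission
  imports Defs
begin

lemma root_bag: "nice_td V E T t \<Longrightarrow> T \<in> bags t"
  by (induction rule: nice_td.induct) auto

lemma main:
  assumes "nice_td V E T t" "finite V" "T \<subseteq> V" "width_le t w"
  shows "int (num_nodes t) \<le> (if T = V then 1 else
           int (w+4) * (int (card V) - int (card T)) + int (card T) - int w - 2)"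
  using assms
proof (induction rule: nice_td.induct)
  case (leaf T V E)
  then show ?case by simp
next
  case (forget v V T E t)
  have wl: "width_le t w" using forget.prems by (auto simp: width_le_def)
  have fT: "finite T" using forget.prems finite_subset by blast
  have c: "card (insert v T) = card T + 1" using forget.hyps fT by auto
  have IH: "int (num_nodes t) \<le> (if insert v T = V then 1 else
           int (w+4) * (int (card V) - int (card (insert v T))) + int (card (insert v T)) - int w - 2)"
    using forget.IH forget.prems forget.hyps wl by auto
  have TV: "T \<noteq> V" using forget.hyps by auto
  have cle: "card (insert v T) \<le> card V"
    using forget.hyps forget.prems by (intro card_mono) auto
  show ?case
  proof (cases "insert v T = V")
    case True
    then show ?thesis using IH TV c by simp
  next
    case False
    let ?a = "int (w+4)" let ?x = "int (card V) - int (card T)"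
    have e: "?a * (int (card V) - int (card T + 1)) = ?a * ?x - ?a" by (simp add: algebra_simps)
    from IH False c have "int (num_nodes t) \<le> ?a * (int (card V) - int (card T + 1)) + int (card T + 1) - int w - 2" by simp
    with e TV show ?thesis by simp
  qed
next
  case (intro V E T v t)
  have wl: "width_le t w" using intro.prems by (auto simp: width_le_def)
  have fT: "finite T" using intro.prems finite_subset by blast
  have vT: "v \<in> T" and TV: "T \<noteq> V" using intro.hyps by (auto simp: introduces_def)
  have TV': "T - {v} \<noteq> V - {v}" using TV vT intro.prems by auto
  have IH: "int (num_nodes t) \<le>
           int (w+4) * (int (card (V - {v})) - int (card (T - {v}))) + int (card (T - {v})) - int w - 2"
    using intro.IH intro.prems wl TV' by auto
  have c1: "card (V - {v}) = card V - 1" and c2: "card (T - {v}) = card T - 1"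
    using vT intro.prems by auto
  have p1: "card V \<ge> 1" using vT intro.prems card_0_eq by fastforce
  have p2: "card T \<ge> 1" using vT fT card_0_eq by fastforce
  have e1: "int (card (V - {v})) = int (card V) - 1" using c1 p1 by simp
  have e2: "int (card (T - {v})) = int (card T) - 1" using c2 p2 by simp
  show ?case using IH TV e1 e2 by simp
next
  case (join V E T V1 E1 V2 E2 t1 t2)
  have J: "V1 \<subseteq> V" "V2 \<subseteq> V" "V1 \<inter> V2 = T" "V1 \<union> V2 = V" "V1 \<noteq> T" "V2 \<noteq> T"
    using join.hyps(1) unfolding is_join_def by blast+
  have w1: "width_le t1 w" and w2: "width_le t2 w" using join.prems(3) by (auto simp: width_le_def)
  have f1: "finite V1" using J(1) join.prems(1) by (rule finite_subset)
  have f2: "finite V2" using J(2) join.prems(1) by (rule finite_subset)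
  have T1: "T \<subseteq> V1" and T2: "T \<subseteq> V2" using J(3) by blast+
  have IH1: "int (num_nodes t1) \<le> int (w+4) * (int (card V1) - int (card T)) + int (card T) - int w - 2"
    using join.IH(1)[OF f1 T1 w1] J(5) by (simp split: if_splits)
  have IH2: "int (num_nodes t2) \<le> int (w+4) * (int (card V2) - int (card T)) + int (card T) - int w - 2"
    using join.IH(2)[OF f2 T2 w2] J(6) by (simp split: if_splits)
  have cu: "card V1 + card V2 = card V + card T"
    using card_Un_Int[OF f1 f2] J(3,4) by simp
  have TV: "T \<noteq> V" using J(1,5) T1 by blast
  have "T \<in> bags (Binary T t1 t2)" by simp
  then have kw: "card T \<le> w + 1" using join.prems(3) unfolding width_le_def by blast
  let ?a = "int (w+4)"
  have cu': "int (card V1) + int (card V2) = int (card V) + int (card T)" using cu by (metis of_nat_add)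
  have e: "?a * (int (card V1) - int (card T)) + ?a * (int (card V2) - int (card T)) = ?a * (int (card V) - int (card T))"
    by (simp add: cu' flip: distrib_left)
  have "int (num_nodes (Binary T t1 t2)) = 1 + int (num_nodes t1) + int (num_nodes t2)" by simp
  then show ?case using IH1 IH2 e TV kw by simp
qed

theorem lemma5:
  fixes V :: "'a set" and E :: "'a set set" and T :: "'a set" and t :: "'a dtree" and w :: nat
  assumes "terminal_graph V E T"
    and "nice_td V E T t"
    and "width_le t w"
    and "w \<ge> 1"
    and "card V \<ge> 1"
  shows "num_nodes t \<le> (w + 4) * card V"
proof -
  have fV: "finite V" and TV: "T \<subseteq> V" using assms(1) by (auto simp: terminal_graph_def graph_def)
  have M: "int (num_nodes t) \<le> (if T = V then 1 else
           int (w+4) * (int (card V) - int (card T)) + int (card T) - int w - 2)"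
    using main[OF assms(2) fV TV assms(3)] .
  have "card T \<le> card V" using fV TV card_mono by blast
  then have "int (num_nodes t) \<le> int ((w + 4) * card V)"
  proof (cases "T = V")
    case True
    then have "int (num_nodes t) \<le> 1" using M by simp
    moreover have "1 \<le> (w + 4) * card V" using assms(5) by (simp add: one_le_mult_iff)
    then have "1 \<le> int ((w + 4) * card V)" by linarith
    ultimately show ?thesis by linarith
  next
    case False
    have "int (w+4) * (int (card V) - int (card T)) = int (w+4) * int (card V) - int (w+4) * int (card T)"
      by (simp add: right_diff_distrib)
    moreover have "card T \<le> (w+4) * card T" by simp
    then have "int (card T) \<le> int (w+4) * int (card T)" by (metis of_nat_le_iff of_nat_mult)
    ultimately show ?thesis using M False by simp
  qed
  then show ?thesis by linarith
qed

end
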